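(* Let $n\in\mathbb{Z}$, let $\beta:\mathbb{Z}\to\mathbb{C}$ have convergent increments, and let $d:\mathcal{A}\to A$ be the $n$-covariant derivation $d(a)=[U^n\beta(\mathbb{K}),a]$. Then $d$ is approximately inner if and only if $\beta(k+1)-\beta(k)\to0$ as $k\to\pm\infty$.
   Context: Let $\{E_k\}$ be the canonical basis of $\ell^2(\mathbb{Z})$, $UE_k=E_{k+1}$, $\mathbb{K}E_k=kE_k$, $a(\mathbb{K})E_k=a(k)E_k$. $A$ is the C$^*$-algebra generated by $U$ and all $a(\mathbb{K})$ with $a$ having finite limits at $\pm\infty$; $\mathcal{A}$ is the algebra of finite sums $\sum_mU^ma_m(\mathbb{K})$ with each $a_m$ eventually constant (constant on $k\ge k_0$ and on $k\le-k_0$ for some $k_0$). A function $\beta$ has convergent increments if $k\mapsto\beta(k)-\beta(k-1)$ has finite limits as $k\to\pm\infty$ (this guarantees $d$ maps $\mathcal{A}$ into $A$). A derivation $d:\mathcal{A}\to A$ is approximately inner if there are $x_j\in A$ with $d(a)=\lim_j[x_j,a]$ in norm for all $a\in\mathcal{A}$. *)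

theory Defs
  imports "HOL-Analysis.Analysis"
begin

text \<open>Operators on ell2(Z) are represented by their matrices with respect to the
canonical basis: M i j = inner product of E_i with M E_j.\<close>

type_synonym op = "int \<Rightarrow> int \<Rightarrow> complex"

definition op_add :: "op \<Rightarrow> op \<Rightarrow> op" where
  "op_add M N = (\<lambda>i j. M i j + N i j)"

definition op_diff :: "op \<Rightarrow> op \<Rightarrow> op" where
  "op_diff M N = (\<lambda>i j. M i j - N i j)"

definition op_scale :: "complex \<Rightarrow> op \<Rightarrow> op" where
  "op_scale c M = (\<lambda>i j. c * M i j)"

definition op_mult :: "op \<Rightarrow> op \<Rightarrow> op" where
  "op_mult M N = (\<lambda>i j. infsum (\<lambda>k. M i k * N k j) UNIV)"

definition op_adj :: "op \<Rightarrow> op" where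
  "op_adj M = (\<lambda>i j. cnj (M j i))"

definition op_comm :: "op \<Rightarrow> op \<Rightarrow> op" where
  "op_comm M N = op_diff (op_mult M N) (op_mult N M)"

definition shift :: "int \<Rightarrow> op" where
  "shift m = (\<lambda>i j. if i = j + m then 1 else 0)"

definition diag :: "(int \<Rightarrow> complex) \<Rightarrow> op" where
  "diag a = (\<lambda>i j. if i = j then a j else 0)"

definition opnorm_sq :: "op \<Rightarrow> ennreal" where
  "opnorm_sq M = (SUP x \<in> {x :: int \<Rightarrow> complex. finite {j. x j \<noteq> 0} \<and>
        (\<Sum>j\<in>{j. x j \<noteq> 0}. (cmod (x j))\<^sup>2) \<le> 1}.
      \<integral>\<^sup>+ i. ennreal ((cmod (\<Sum>j\<in>{j. x j \<noteq> 0}. M i j * x j))\<^sup>2) \<partial>count_space UNIV)"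

definition has_finite_limits :: "(int \<Rightarrow> complex) \<Rightarrow> bool" where
  "has_finite_limits a \<longleftrightarrow> (\<exists>l1 l2. (a \<longlongrightarrow> l1) at_top \<and> (a \<longlongrightarrow> l2) at_bot)"

definition eventually_const :: "(int \<Rightarrow> complex) \<Rightarrow> bool" where
  "eventually_const a \<longleftrightarrow> (\<exists>k0. (\<forall>k\<ge>k0. a k = a k0) \<and> (\<forall>k\<le>-k0. a k = a (-k0)))"

inductive_set Calg :: "op set" where
  gen_U: "shift 1 \<in> Calg"
| gen_diag: "has_finite_limits a \<Longrightarrow> diag a \<in> Calg"
| add: "M \<in> Calg \<Longrightarrow> N \<in> Calg \<Longrightarrow> op_add M N \<in> Calg"
| scale: "M \<in> Calg \<Longrightarrow> op_scale c M \<in> Calg"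
| mult: "M \<in> Calg \<Longrightarrow> N \<in> Calg \<Longrightarrow> op_mult M N \<in> Calg"
| adj: "M \<in> Calg \<Longrightarrow> op_adj M \<in> Calg"
| lim: "(\<And>j. X j \<in> Calg) \<Longrightarrow> ((\<lambda>j. opnorm_sq (op_diff (X j) Y)) \<longlongrightarrow> 0) sequentially
        \<Longrightarrow> Y \<in> Calg"

definition Alg0 :: "op set" where
  "Alg0 = {M. \<exists>F a. finite F \<and> (\<forall>m\<in>F. eventually_const (a m)) \<and>
       M = (\<lambda>i j. \<Sum>m\<in>F. op_mult (shift m) (diag (a m)) i j)}"

definition convergent_increments :: "(int \<Rightarrow> complex) \<Rightarrow> bool" where
  "convergent_increments \<beta> \<longleftrightarrow>
     (\<exists>L1 L2. ((\<lambda>k. \<beta> k - \<beta> (k - 1)) \<longlongrightarrow> L1) at_top \<and>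
             ((\<lambda>k. \<beta> k - \<beta> (k - 1)) \<longlongrightarrow> L2) at_bot)"

definition cov_deriv :: "int \<Rightarrow> (int \<Rightarrow> complex) \<Rightarrow> op \<Rightarrow> op" where
  "cov_deriv n \<beta> a = op_comm (op_mult (shift n) (diag \<beta>)) a"

definition approx_inner :: "(op \<Rightarrow> op) \<Rightarrow> bool" where
  "approx_inner d \<longleftrightarrow> (\<exists>x :: nat \<Rightarrow> op. (\<forall>j. x j \<in> Calg) \<and>
      (\<forall>a\<in>Alg0. ((\<lambda>j. opnorm_sq (op_diff (d a) (op_comm (x j) a))) \<longlongrightarrow> 0) sequentially))"

end

theory Submission
  imports Defs
begin

lemma nn_count_le:
  fixes f :: "int \<Rightarrow> ennreal"
  assumes "\<And>I. finite I \<Longrightarrow> (\<Sum>i\<in>I. f i) \<le> B"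
  shows "(\<integral>\<^sup>+ i. f i \<partial>count_space UNIV) \<le> B"
proof -
  have eq: "f i = (SUP N::nat. f i * indicator {- int N..int N} i)" for i
  proof -
    have "i \<in> {- int (nat \<bar>i\<bar>)..int (nat \<bar>i\<bar>)}" by auto
    then have "f i = f i * indicator {- int (nat \<bar>i\<bar>)..int (nat \<bar>i\<bar>)} i" by (simp add: indicator_def)
    moreover have "f i * indicator {- int N..int N} i \<le> f i" for N
      by (simp add: indicator_def)
    ultimately show ?thesis
      by (intro antisym SUP_upper2[where i="nat \<bar>i\<bar>"]) (auto intro!: SUP_least)
  qed
  have inc: "incseq (\<lambda>N::nat. \<lambda>i. f i * indicator {- int N..int N} i)"
    by (auto simp: incseq_def le_fun_def indicator_def intro!: mult_left_mono)
  have "(\<integral>\<^sup>+ i. f i \<partial>count_space UNIV) = (\<integral>\<^sup>+ i. (SUP N::nat. f i * indicator {- int N..int N} i) \<partial>count_space UNIV)"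
    using eq by simp
  also have "\<dots> = (SUP N::nat. (\<integral>\<^sup>+ i. f i * indicator {- int N..int N} i \<partial>count_space UNIV))"
    by (rule nn_integral_monotone_convergence_SUP[OF inc]) simp
  also have "\<dots> \<le> B"
  proof (rule SUP_least)
    fix N :: nat
    have "(\<integral>\<^sup>+ i. f i * indicator {- int N..int N} i \<partial>count_space UNIV) = (\<Sum>i\<in>{- int N..int N}. f i * indicator {- int N..int N} i)"
      by (rule nn_integral_count_space') auto
    also have "\<dots> = (\<Sum>i\<in>{- int N..int N}. f i)" by (rule sum.cong) auto
    also have "\<dots> \<le> B" by (rule assms) simp
    finally show "(\<integral>\<^sup>+ i. f i * indicator {- int N..int N} i \<partial>count_space UNIV) \<le> B" .
  qed
  finally show ?thesis .
qed

lemma nn_count_ge: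
  fixes f :: "int \<Rightarrow> ennreal"
  assumes "finite I"
  shows "(\<Sum>i\<in>I. f i) \<le> (\<integral>\<^sup>+ i. f i \<partial>count_space UNIV)"
proof -
  have "(\<Sum>i\<in>I. f i) = (\<integral>\<^sup>+ i. f i * indicator I i \<partial>count_space UNIV)"
    using assms by (subst nn_integral_count_space') (auto intro!: sum.cong)
  also have "\<dots> \<le> (\<integral>\<^sup>+ i. f i \<partial>count_space UNIV)"
    by (intro nn_integral_mono) (auto simp: indicator_def)
  finally show ?thesis .
qed

definition bnd :: "op \<Rightarrow> real \<Rightarrow> bool" where
  "bnd M B \<longleftrightarrow> (\<forall>S x I. finite S \<longrightarrow> finite I \<longrightarrow>
     (\<Sum>i\<in>I. (cmod (\<Sum>j\<in>S. M i j * x j))\<^sup>2) \<le> B * (\<Sum>j\<in>S. (cmod (x j))\<^sup>2))"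

lemma bndD: "bnd M B \<Longrightarrow> finite S \<Longrightarrow> finite I \<Longrightarrow>
     (\<Sum>i\<in>I. (cmod (\<Sum>j\<in>S. M i j * x j))\<^sup>2) \<le> B * (\<Sum>j\<in>S. (cmod (x j))\<^sup>2)"
  unfolding bnd_def by blast

lemma bnd_nonneg: "bnd M B \<Longrightarrow> 0 \<le> B"
  using bndD[of M B "{0}" "{}" "\<lambda>_. 1"] by simp

lemma bnd_entry: "bnd M B \<Longrightarrow> (cmod (M i j))\<^sup>2 \<le> B"
  using bndD[of M B "{j}" "{i}" "\<lambda>_. 1"] by simp

lemma bnd_opnorm: assumes "bnd M B" shows "opnorm_sq M \<le> ennreal B"
  unfolding opnorm_sq_def
proof (rule SUP_least)
  fix x assume x: "x \<in> {x :: int \<Rightarrow> complex. finite {j. x j \<noteq> 0} \<and>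
        (\<Sum>j\<in>{j. x j \<noteq> 0}. (cmod (x j))\<^sup>2) \<le> 1}"
  show "(\<integral>\<^sup>+ i. ennreal ((cmod (\<Sum>j\<in>{j. x j \<noteq> 0}. M i j * x j))\<^sup>2) \<partial>count_space UNIV) \<le> ennreal B"
  proof (rule nn_count_le)
    fix I :: "int set" assume I: "finite I"
    have "(\<Sum>i\<in>I. ennreal ((cmod (\<Sum>j\<in>{j. x j \<noteq> 0}. M i j * x j))\<^sup>2))
        = ennreal (\<Sum>i\<in>I. (cmod (\<Sum>j\<in>{j. x j \<noteq> 0}. M i j * x j))\<^sup>2)"
      by (rule sum_ennreal) simp
    also have "\<dots> \<le> ennreal B"
    proof (rule ennreal_leI)
      have "(\<Sum>i\<in>I. (cmod (\<Sum>j\<in>{j. x j \<noteq> 0}. M i j * x j))\<^sup>2) \<le> B * (\<Sum>j\<in>{j. x j \<noteq> 0}. (cmod (x j))\<^sup>2)"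
        using bndD[OF assms _ I] x by blast
      also have "\<dots> \<le> B * 1"
        using x bnd_nonneg[OF assms] by (intro mult_left_mono) auto
      finally show "(\<Sum>i\<in>I. (cmod (\<Sum>j\<in>{j. x j \<noteq> 0}. M i j * x j))\<^sup>2) \<le> B" by simp
    qed
    finally show "(\<Sum>i\<in>I. ennreal ((cmod (\<Sum>j\<in>{j. x j \<noteq> 0}. M i j * x j))\<^sup>2)) \<le> ennreal B" .
  qed
qed

lemma opnorm_bnd: assumes "opnorm_sq M \<le> ennreal e" "0 \<le> e" shows "bnd M e"
  unfolding bnd_def
proof (intro allI impI)
  fix S x I assume S: "finite (S::int set)" and I: "finite (I::int set)"
  define X where "X = (\<Sum>j\<in>S. (cmod (x j))\<^sup>2)"
  show "(\<Sum>i\<in>I. (cmod (\<Sum>j\<in>S. M i j * x j))\<^sup>2) \<le> e * X"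
  proof (cases "X = 0")
    case True
    then have "\<forall>j\<in>S. x j = 0" unfolding X_def using S by (simp add: sum_nonneg_eq_0_iff)
    then show ?thesis using True by simp
  next
    case False
    then have Xpos: "X > 0" unfolding X_def by (simp add: order_less_le sum_nonneg)
    define y where "y = (\<lambda>j. if j \<in> S then x j / complex_of_real (sqrt X) else 0)"
    have supp: "{j. y j \<noteq> 0} \<subseteq> S" unfolding y_def by auto
    have fin: "finite {j. y j \<noteq> 0}" using supp S finite_subset by blast
    have sumS: "(\<Sum>j\<in>{j. y j \<noteq> 0}. g j * y j) = (\<Sum>j\<in>S. g j * y j)" for g
      using supp S by (intro sum.mono_neutral_left) auto
    have sumS2: "(\<Sum>j\<in>{j. y j \<noteq> 0}. (cmod (y j))\<^sup>2) = (\<Sum>j\<in>S. (cmod (y j))\<^sup>2)"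
      using supp S by (intro sum.mono_neutral_left) auto
    have "(\<Sum>j\<in>S. (cmod (y j))\<^sup>2) = (\<Sum>j\<in>S. (cmod (x j))\<^sup>2 / X)"
      using Xpos by (intro sum.cong) (auto simp: y_def norm_divide power_divide)
    also have "\<dots> = 1" using Xpos by (simp add: X_def[symmetric] sum_divide_distrib[symmetric])
    finally have y1: "(\<Sum>j\<in>{j. y j \<noteq> 0}. (cmod (y j))\<^sup>2) \<le> 1" using sumS2 by simp
    have "(\<integral>\<^sup>+ i. ennreal ((cmod (\<Sum>j\<in>{j. y j \<noteq> 0}. M i j * y j))\<^sup>2) \<partial>count_space UNIV) \<le> opnorm_sq M"
      unfolding opnorm_sq_def using fin y1 by (intro SUP_upper) auto
    also have "\<dots> \<le> ennreal e" by fact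
    finally have le: "(\<integral>\<^sup>+ i. ennreal ((cmod (\<Sum>j\<in>S. M i j * y j))\<^sup>2) \<partial>count_space UNIV) \<le> ennreal e"
      by (simp add: sumS)
    have "ennreal (\<Sum>i\<in>I. (cmod (\<Sum>j\<in>S. M i j * y j))\<^sup>2) = (\<Sum>i\<in>I. ennreal ((cmod (\<Sum>j\<in>S. M i j * y j))\<^sup>2))"
      by (rule sum_ennreal[symmetric]) simp
    also have "\<dots> \<le> ennreal e" using nn_count_ge[OF I] le order_trans by blast
    finally have le2: "(\<Sum>i\<in>I. (cmod (\<Sum>j\<in>S. M i j * y j))\<^sup>2) \<le> e"
      using assms(2) ennreal_le_iff by blast
    have "(\<Sum>j\<in>S. M i j * y j) = (\<Sum>j\<in>S. M i j * x j) / complex_of_real (sqrt X)" for i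
      unfolding y_def by (simp add: sum_divide_distrib)
    then have "(\<Sum>i\<in>I. (cmod (\<Sum>j\<in>S. M i j * y j))\<^sup>2) = (\<Sum>i\<in>I. (cmod (\<Sum>j\<in>S. M i j * x j))\<^sup>2 / X)"
      using Xpos by (intro sum.cong) (simp_all add: norm_divide power_divide del: sum_divide_distrib)
    also have "\<dots> = (\<Sum>i\<in>I. (cmod (\<Sum>j\<in>S. M i j * x j))\<^sup>2) / X"
      by (simp add: sum_divide_distrib)
    finally have "(\<Sum>i\<in>I. (cmod (\<Sum>j\<in>S. M i j * y j))\<^sup>2) = (\<Sum>i\<in>I. (cmod (\<Sum>j\<in>S. M i j * x j))\<^sup>2) / X" .
    with le2 Xpos show ?thesis by (simp add: divide_le_eq mult.commute)
  qed
qed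

lemma infsum_single_pt:
  fixes g :: "'a \<Rightarrow> 'b::{topological_comm_monoid_add,t2_space}"
  assumes "\<And>k. k \<noteq> c \<Longrightarrow> g k = 0"
  shows "infsum g UNIV = g c"
  by (rule infsumI, rule has_sum_finite_neutralI[where B="{c}"]) (use assms in auto)

lemma summable_sum_fin:
  fixes f :: "'i \<Rightarrow> 'a \<Rightarrow> complex"
  assumes "finite F" "\<And>m. m \<in> F \<Longrightarrow> f m summable_on A"
  shows "(\<lambda>k. \<Sum>m\<in>F. f m k) summable_on A"
  using assms by (induction F rule: finite_induct) (auto intro!: summable_on_add)

lemma infsum_sum_fin:
  fixes f :: "'i \<Rightarrow> 'a \<Rightarrow> complex"
  assumes "finite F" "\<And>m. m \<in> F \<Longrightarrow> f m summable_on A"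
  shows "infsum (\<lambda>k. \<Sum>m\<in>F. f m k) A = (\<Sum>m\<in>F. infsum (f m) A)"
  using assms
proof (induction F rule: finite_induct)
  case empty then show ?case by simp
next
  case (insert a F)
  have "infsum (\<lambda>k. \<Sum>m\<in>insert a F. f m k) A = infsum (\<lambda>k. f a k + (\<Sum>m\<in>F. f m k)) A"
    using insert.hyps by simp
  also have "\<dots> = infsum (f a) A + infsum (\<lambda>k. \<Sum>m\<in>F. f m k) A"
    using insert by (intro infsum_add summable_sum_fin) auto
  finally show ?case using insert by simp
qed

lemma sq_add_le: "(cmod (a + b))\<^sup>2 \<le> 2 * (cmod a)\<^sup>2 + 2 * (cmod b)\<^sup>2"
proof -
  have "cmod (a + b) \<le> cmod a + cmod b" by (rule norm_triangle_ineq)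
  then have "(cmod (a + b))\<^sup>2 \<le> (cmod a + cmod b)\<^sup>2" by (simp add: power_mono)
  also have "\<dots> \<le> 2 * (cmod a)\<^sup>2 + 2 * (cmod b)\<^sup>2"
  proof -
    have "0 \<le> (cmod a - cmod b)\<^sup>2" by simp
    then show ?thesis by (simp add: power2_eq_square algebra_simps)
  qed
  finally show ?thesis .
qed

lemma bnd_add: assumes "bnd M B1" "bnd N B2" shows "bnd (op_add M N) (2 * B1 + 2 * B2)"
  unfolding bnd_def
proof (intro allI impI)
  fix S x I assume S: "finite (S::int set)" and I: "finite (I::int set)"
  have "(\<Sum>i\<in>I. (cmod (\<Sum>j\<in>S. op_add M N i j * x j))\<^sup>2)
      = (\<Sum>i\<in>I. (cmod ((\<Sum>j\<in>S. M i j * x j) + (\<Sum>j\<in>S. N i j * x j)))\<^sup>2)"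
    by (simp add: op_add_def distrib_right sum.distrib)
  also have "\<dots> \<le> (\<Sum>i\<in>I. 2 * (cmod (\<Sum>j\<in>S. M i j * x j))\<^sup>2 + 2 * (cmod (\<Sum>j\<in>S. N i j * x j))\<^sup>2)"
    by (intro sum_mono sq_add_le)
  also have "\<dots> = 2 * (\<Sum>i\<in>I. (cmod (\<Sum>j\<in>S. M i j * x j))\<^sup>2) + 2 * (\<Sum>i\<in>I. (cmod (\<Sum>j\<in>S. N i j * x j))\<^sup>2)"
    by (simp add: sum.distrib sum_distrib_left)
  also have "\<dots> \<le> 2 * (B1 * (\<Sum>j\<in>S. (cmod (x j))\<^sup>2)) + 2 * (B2 * (\<Sum>j\<in>S. (cmod (x j))\<^sup>2))"
    using bndD[OF assms(1) S I, of x] bndD[OF assms(2) S I, of x] by linarith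
  finally show "(\<Sum>i\<in>I. (cmod (\<Sum>j\<in>S. op_add M N i j * x j))\<^sup>2) \<le> (2 * B1 + 2 * B2) * (\<Sum>j\<in>S. (cmod (x j))\<^sup>2)"
    by (simp add: algebra_simps)
qed

lemma bnd_scale: assumes "bnd M B" shows "bnd (op_scale c M) ((cmod c)\<^sup>2 * B)"
  unfolding bnd_def
proof (intro allI impI)
  fix S x I assume S: "finite (S::int set)" and I: "finite (I::int set)"
  have "(\<Sum>i\<in>I. (cmod (\<Sum>j\<in>S. op_scale c M i j * x j))\<^sup>2)
      = (cmod c)\<^sup>2 * (\<Sum>i\<in>I. (cmod (\<Sum>j\<in>S. M i j * x j))\<^sup>2)"
    by (simp add: op_scale_def sum_distrib_left[symmetric] mult.assoc norm_mult power_mult_distrib)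
  also have "\<dots> \<le> (cmod c)\<^sup>2 * (B * (\<Sum>j\<in>S. (cmod (x j))\<^sup>2))"
    using bndD[OF assms S I] by (intro mult_left_mono) auto
  finally show "(\<Sum>i\<in>I. (cmod (\<Sum>j\<in>S. op_scale c M i j * x j))\<^sup>2) \<le> (cmod c)\<^sup>2 * B * (\<Sum>j\<in>S. (cmod (x j))\<^sup>2)"
    by (simp add: mult.assoc)
qed

lemma op_diff_alt: "op_diff M N = op_add M (op_scale (-1) N)"
  by (simp add: op_diff_def op_add_def op_scale_def fun_eq_iff)

lemma bnd_diff: assumes "bnd M B1" "bnd N B2" shows "bnd (op_diff M N) (2 * B1 + 2 * B2)"
  using bnd_add[OF assms(1) bnd_scale[OF assms(2), of "-1"]] by (simp add: op_diff_alt)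

lemma bnd_mono: "bnd M B \<Longrightarrow> B \<le> B' \<Longrightarrow> bnd M B'"
  unfolding bnd_def
proof (intro allI impI)
  fix S x I assume a: "\<forall>S x I. finite S \<longrightarrow> finite I \<longrightarrow>
     (\<Sum>i\<in>I. (cmod (\<Sum>j\<in>S. M i j * x j))\<^sup>2) \<le> B * (\<Sum>j\<in>S. (cmod (x j))\<^sup>2)"
    and b: "B \<le> B'" and S: "finite (S::int set)" and I: "finite (I::int set)"
  have "B * (\<Sum>j\<in>S. (cmod (x j))\<^sup>2) \<le> B' * (\<Sum>j\<in>S. (cmod (x j))\<^sup>2)"
    using b by (intro mult_right_mono sum_nonneg) auto
  then show "(\<Sum>i\<in>I. (cmod (\<Sum>j\<in>S. M i j * x j))\<^sup>2) \<le> B' * (\<Sum>j\<in>S. (cmod (x j))\<^sup>2)"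
    using a S I by (meson order_trans)
qed

lemma cs_complex:
  fixes x w :: "'a \<Rightarrow> complex"
  shows "cmod (\<Sum>j\<in>S. x j * w j) \<le> sqrt (\<Sum>j\<in>S. (cmod (x j))\<^sup>2) * sqrt (\<Sum>j\<in>S. (cmod (w j))\<^sup>2)"
proof -
  have "cmod (\<Sum>j\<in>S. x j * w j) \<le> (\<Sum>j\<in>S. \<bar>cmod (x j)\<bar> * \<bar>cmod (w j)\<bar>)"
    by (rule order_trans[OF norm_sum]) (simp add: norm_mult)
  also have "\<dots> \<le> L2_set (\<lambda>j. cmod (x j)) S * L2_set (\<lambda>j. cmod (w j)) S"
    by (rule L2_set_mult_ineq)
  finally show ?thesis by (simp add: L2_set_def)
qed

lemma bnd_adj: assumes "bnd M B" shows "bnd (op_adj M) B"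
  unfolding bnd_def
proof (intro allI impI)
  fix S x I assume S: "finite (S::int set)" and I: "finite (I::int set)"
  define z where "z = (\<lambda>i. \<Sum>j\<in>S. op_adj M i j * x j)"
  define w where "w = (\<lambda>j. \<Sum>i\<in>I. M j i * z i)"
  define Z where "Z = (\<Sum>i\<in>I. (cmod (z i))\<^sup>2)"
  define X where "X = (\<Sum>j\<in>S. (cmod (x j))\<^sup>2)"
  define W where "W = (\<Sum>j\<in>S. (cmod (w j))\<^sup>2)"
  have B0: "0 \<le> B" using bnd_nonneg[OF assms] .
  have Z0: "0 \<le> Z" "0 \<le> X" "0 \<le> W" unfolding Z_def X_def W_def by (auto intro: sum_nonneg)
  have "complex_of_real Z = (\<Sum>i\<in>I. z i * cnj (z i))"
    unfolding Z_def by (subst of_real_sum) (rule sum.cong[OF refl], rule complex_norm_square)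
  also have "\<dots> = (\<Sum>i\<in>I. \<Sum>j\<in>S. cnj (M j i) * x j * cnj (z i))"
    unfolding z_def op_adj_def by (simp add: sum_distrib_right)
  also have "\<dots> = (\<Sum>j\<in>S. \<Sum>i\<in>I. cnj (M j i) * x j * cnj (z i))"
    by (rule sum.swap)
  also have "\<dots> = (\<Sum>j\<in>S. x j * cnj (w j))"
    unfolding w_def by (simp add: sum_distrib_left mult_ac)
  finally have "complex_of_real Z = (\<Sum>j\<in>S. x j * cnj (w j))" .
  then have "Z = cmod (\<Sum>j\<in>S. x j * cnj (w j))" using Z0 by (metis norm_of_real abs_of_nonneg)
  also have "\<dots> \<le> sqrt X * sqrt (\<Sum>j\<in>S. (cmod (cnj (w j)))\<^sup>2)"
    unfolding X_def by (rule cs_complex)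
  finally have ZX: "Z \<le> sqrt X * sqrt W" unfolding W_def by simp
  have WB: "W \<le> B * Z" unfolding W_def Z_def w_def using bndD[OF assms I S] by blast
  have "Z \<le> B * X"
  proof (cases "Z = 0")
    case True then show ?thesis using B0 Z0 by simp
  next
    case False
    then have Zp: "Z > 0" using Z0 by simp
    have "Z\<^sup>2 \<le> (sqrt X * sqrt W)\<^sup>2" using ZX Z0 by (intro power_mono) auto
    also have "\<dots> = X * W" using Z0 by (simp add: power_mult_distrib)
    also have "\<dots> \<le> X * (B * Z)" using WB Z0 by (intro mult_left_mono) auto
    finally have "Z * Z \<le> (B * X) * Z" by (simp add: power2_eq_square mult_ac)
    then show ?thesis using Zp by simp
  qed
  then show "(\<Sum>i\<in>I. (cmod (\<Sum>j\<in>S. op_adj M i j * x j))\<^sup>2) \<le> B * (\<Sum>j\<in>S. (cmod (x j))\<^sup>2)"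
    unfolding Z_def z_def X_def .
qed

lemma bnd_row: assumes "bnd M B" "finite T" shows "(\<Sum>k\<in>T. (cmod (M i k))\<^sup>2) \<le> B"
  using bndD[OF bnd_adj[OF assms(1)] _ assms(2), of "{i}" "\<lambda>_. 1"] by (simp add: op_adj_def)

lemma bnd_col: assumes "bnd M B" "finite T" shows "(\<Sum>k\<in>T. (cmod (M k j))\<^sup>2) \<le> B"
  using bndD[OF assms(1) _ assms(2), of "{j}" "\<lambda>_. 1"] by simp

lemma bnd_prod_summable:
  assumes "bnd M B1" "bnd N B2"
  shows "(\<lambda>k. M i k * N k j) summable_on UNIV"
proof (rule abs_summable_summable, rule nonneg_bdd_above_summable_on)
  show "bdd_above (sum (\<lambda>k. norm (M i k * N k j)) ` {F. F \<subseteq> UNIV \<and> finite F})"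
  proof (rule bdd_aboveI)
    fix y assume "y \<in> sum (\<lambda>k. norm (M i k * N k j)) ` {F. F \<subseteq> UNIV \<and> finite F}"
    then obtain T where T: "finite T" "y = (\<Sum>k\<in>T. norm (M i k * N k j))" by auto
    have "y \<le> (\<Sum>k\<in>T. ((cmod (M i k))\<^sup>2 + (cmod (N k j))\<^sup>2) / 2)"
      unfolding T(2) norm_mult
    proof (rule sum_mono)
      fix k
      have "0 \<le> (cmod (M i k) - cmod (N k j))\<^sup>2" by simp
      then show "cmod (M i k) * cmod (N k j) \<le> ((cmod (M i k))\<^sup>2 + (cmod (N k j))\<^sup>2) / 2"
        by (simp add: power2_eq_square algebra_simps)
    qed
    also have "\<dots> = ((\<Sum>k\<in>T. (cmod (M i k))\<^sup>2) + (\<Sum>k\<in>T. (cmod (N k j))\<^sup>2)) / 2"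
      by (simp add: sum.distrib sum_divide_distrib[symmetric])
    also have "\<dots> \<le> (B1 + B2) / 2"
      using bnd_row[OF assms(1) T(1), of i] bnd_col[OF assms(2) T(1), of j] by (intro divide_right_mono add_mono) auto
    finally show "y \<le> (B1 + B2) / 2" .
  qed
qed simp

lemma bnd_mult: assumes "bnd M B1" "bnd N B2" shows "bnd (op_mult M N) (B1 * B2)"
  unfolding bnd_def
proof (intro allI impI)
  fix S x I assume S: "finite (S::int set)" and I: "finite (I::int set)"
  define y where "y = (\<lambda>k. \<Sum>j\<in>S. N k j * x j)"
  define v where "v = (\<lambda>i. \<Sum>j\<in>S. op_mult M N i j * x j)"
  define X where "X = (\<Sum>j\<in>S. (cmod (x j))\<^sup>2)"
  have B1: "0 \<le> B1" using bnd_nonneg[OF assms(1)] .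
  have hs: "((\<lambda>k. M i k * y k) has_sum v i) UNIV" for i
  proof -
    have sm: "(\<lambda>k. M i k * N k j * x j) summable_on UNIV" for j
      by (intro summable_on_cmult_left bnd_prod_summable[OF assms])
    have "v i = (\<Sum>j\<in>S. infsum (\<lambda>k. M i k * N k j * x j) UNIV)"
      unfolding v_def op_mult_def by (simp add: infsum_cmult_left')
    also have "\<dots> = infsum (\<lambda>k. \<Sum>j\<in>S. M i k * N k j * x j) UNIV"
      by (rule infsum_sum_fin[symmetric]) (use S sm in auto)
    also have "\<dots> = infsum (\<lambda>k. M i k * y k) UNIV"
      unfolding y_def by (simp add: sum_distrib_left mult_ac)
    finally have "v i = infsum (\<lambda>k. M i k * y k) UNIV" .
    moreover have "(\<lambda>k. M i k * y k) summable_on UNIV"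
    proof -
      have "(\<lambda>k. \<Sum>j\<in>S. M i k * N k j * x j) summable_on UNIV"
        by (rule summable_sum_fin) (use S sm in auto)
      then show ?thesis unfolding y_def by (simp add: sum_distrib_left mult_ac)
    qed
    ultimately show ?thesis by (simp add: has_sum_iff)
  qed
  have lim: "((\<lambda>T. \<Sum>i\<in>I. (cmod (\<Sum>k\<in>T. M i k * y k))\<^sup>2) \<longlongrightarrow> (\<Sum>i\<in>I. (cmod (v i))\<^sup>2))
        (finite_subsets_at_top UNIV)"
    using hs unfolding has_sum_def by (intro tendsto_intros) auto
  have ev: "\<forall>\<^sub>F T in finite_subsets_at_top UNIV. (\<Sum>i\<in>I. (cmod (\<Sum>k\<in>T. M i k * y k))\<^sup>2) \<le> B1 * (B2 * X)"
  proof (rule eventually_finite_subsets_at_top_weakI)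
    fix T :: "int set" assume T: "finite T" "T \<subseteq> UNIV"
    have "(\<Sum>i\<in>I. (cmod (\<Sum>k\<in>T. M i k * y k))\<^sup>2) \<le> B1 * (\<Sum>k\<in>T. (cmod (y k))\<^sup>2)"
      using bndD[OF assms(1)] T I by blast
    also have "\<dots> \<le> B1 * (B2 * X)"
      using bndD[OF assms(2) S, of T x] T B1 unfolding y_def X_def by (intro mult_left_mono) auto
    finally show "(\<Sum>i\<in>I. (cmod (\<Sum>k\<in>T. M i k * y k))\<^sup>2) \<le> B1 * (B2 * X)" .
  qed
  have "(\<Sum>i\<in>I. (cmod (v i))\<^sup>2) \<le> B1 * (B2 * X)"
    by (rule tendsto_upperbound[OF lim ev]) (simp add: finite_subsets_at_top_neq_bot)
  then show "(\<Sum>i\<in>I. (cmod (\<Sum>j\<in>S. op_mult M N i j * x j))\<^sup>2) \<le> B1 * B2 * (\<Sum>j\<in>S. (cmod (x j))\<^sup>2)"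
    unfolding v_def X_def by (simp add: mult.assoc)
qed

definition band :: "int \<Rightarrow> (int \<Rightarrow> complex) \<Rightarrow> op" where
  "band s g = (\<lambda>i j. if i = j + s then g j else 0)"

lemma shift_sum_le:
  fixes h :: "int \<Rightarrow> real"
  assumes "finite I" "finite S" "\<And>j. 0 \<le> h j"
  shows "(\<Sum>i\<in>I. if i - s \<in> S then h (i - s) else 0) \<le> (\<Sum>j\<in>S. h j)"
proof -
  have "(\<Sum>i\<in>I. if i - s \<in> S then h (i - s) else 0) = (\<Sum>i\<in>{i\<in>I. i - s \<in> S}. h (i - s))"
    using assms(1) by (simp add: sum.inter_filter)
  also have "\<dots> \<le> (\<Sum>i\<in>(\<lambda>j. j + s) ` S. h (i - s))"
    using assms by (intro sum_mono2) (auto simp: image_iff intro!: bexI[where x="_ - s"])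
  also have "\<dots> = (\<Sum>j\<in>S. h j)"
    by (subst sum.reindex) (auto simp: inj_on_def)
  finally show ?thesis .
qed

lemma bnd_band: assumes "\<And>j. cmod (g j) \<le> c" shows "bnd (band s g) (c\<^sup>2)"
  unfolding bnd_def
proof (intro allI impI)
  fix S x I assume S: "finite (S::int set)" and I: "finite (I::int set)"
  have e: "(\<Sum>j\<in>S. band s g i j * x j) = (if i - s \<in> S then g (i - s) * x (i - s) else 0)" for i
  proof -
    have "(\<Sum>j\<in>S. band s g i j * x j) = (\<Sum>j\<in>S. if j = i - s then g j * x j else 0)"
      unfolding band_def by (intro sum.cong) auto
    also have "\<dots> = (if i - s \<in> S then g (i - s) * x (i - s) else 0)"
      using S by (simp add: sum.delta')
    finally show ?thesis .
  qed
  have "(\<Sum>i\<in>I. (cmod (\<Sum>j\<in>S. band s g i j * x j))\<^sup>2)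
      \<le> (\<Sum>i\<in>I. if i - s \<in> S then c\<^sup>2 * (cmod (x (i - s)))\<^sup>2 else 0)"
  proof (rule sum_mono)
    fix i
    have "(cmod (g (i - s) * x (i - s)))\<^sup>2 \<le> c\<^sup>2 * (cmod (x (i - s)))\<^sup>2"
      unfolding norm_mult power_mult_distrib
      using assms[of "i - s"] by (intro mult_right_mono power_mono) auto
    then show "(cmod (\<Sum>j\<in>S. band s g i j * x j))\<^sup>2 \<le> (if i - s \<in> S then c\<^sup>2 * (cmod (x (i - s)))\<^sup>2 else 0)"
      by (simp add: e)
  qed
  also have "\<dots> \<le> (\<Sum>j\<in>S. c\<^sup>2 * (cmod (x j))\<^sup>2)"
    by (rule shift_sum_le[OF I S]) simp
  finally show "(\<Sum>i\<in>I. (cmod (\<Sum>j\<in>S. band s g i j * x j))\<^sup>2) \<le> c\<^sup>2 * (\<Sum>j\<in>S. (cmod (x j))\<^sup>2)"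
    by (simp add: sum_distrib_left)
qed

lemma sq_sum_le:
  fixes z :: "'a \<Rightarrow> complex"
  assumes "finite F"
  shows "(cmod (\<Sum>m\<in>F. z m))\<^sup>2 \<le> real (card F) * (\<Sum>m\<in>F. (cmod (z m))\<^sup>2)"
proof -
  have "cmod (\<Sum>m\<in>F. z m) = cmod (\<Sum>m\<in>F. z m * 1)" by simp
  also have "\<dots> \<le> sqrt (\<Sum>m\<in>F. (cmod (z m))\<^sup>2) * sqrt (\<Sum>m\<in>F. (cmod (1::complex))\<^sup>2)"
    by (rule cs_complex)
  finally have "cmod (\<Sum>m\<in>F. z m) \<le> sqrt (\<Sum>m\<in>F. (cmod (z m))\<^sup>2) * sqrt (real (card F))" by simp
  then have "(cmod (\<Sum>m\<in>F. z m))\<^sup>2 \<le> (sqrt (\<Sum>m\<in>F. (cmod (z m))\<^sup>2) * sqrt (real (card F)))\<^sup>2"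
    by (intro power_mono) auto
  also have "\<dots> = real (card F) * (\<Sum>m\<in>F. (cmod (z m))\<^sup>2)"
    by (simp add: power_mult_distrib sum_nonneg)
  finally show ?thesis .
qed

lemma bnd_sum:
  assumes F: "finite F" and b: "\<And>m. m \<in> F \<Longrightarrow> bnd (Mm m) B" and B: "0 \<le> B"
  shows "bnd (\<lambda>i j. \<Sum>m\<in>F. Mm m i j) (real (card F) * real (card F) * B)"
  unfolding bnd_def
proof (intro allI impI)
  fix S x I assume S: "finite (S::int set)" and I: "finite (I::int set)"
  have "(\<Sum>i\<in>I. (cmod (\<Sum>j\<in>S. (\<Sum>m\<in>F. Mm m i j) * x j))\<^sup>2)
      = (\<Sum>i\<in>I. (cmod (\<Sum>m\<in>F. \<Sum>j\<in>S. Mm m i j * x j))\<^sup>2)"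
    by (simp add: sum_distrib_right sum.swap[of _ S])
  also have "\<dots> \<le> (\<Sum>i\<in>I. real (card F) * (\<Sum>m\<in>F. (cmod (\<Sum>j\<in>S. Mm m i j * x j))\<^sup>2))"
    by (intro sum_mono sq_sum_le F)
  also have "\<dots> = real (card F) * (\<Sum>m\<in>F. \<Sum>i\<in>I. (cmod (\<Sum>j\<in>S. Mm m i j * x j))\<^sup>2)"
    by (simp add: sum_distrib_left sum.swap[of _ I])
  also have "\<dots> \<le> real (card F) * (\<Sum>m\<in>F. B * (\<Sum>j\<in>S. (cmod (x j))\<^sup>2))"
    using bndD[OF b S I] by (intro mult_left_mono sum_mono) auto
  also have "\<dots> = real (card F) * real (card F) * B * (\<Sum>j\<in>S. (cmod (x j))\<^sup>2)"
    by simp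
  finally show "(\<Sum>i\<in>I. (cmod (\<Sum>j\<in>S. (\<Sum>m\<in>F. Mm m i j) * x j))\<^sup>2) \<le> real (card F) * real (card F) * B * (\<Sum>j\<in>S. (cmod (x j))\<^sup>2)" .
qed

lemma bounded_lims:
  fixes a :: "int \<Rightarrow> complex"
  assumes "(a \<longlongrightarrow> l1) at_top" "(a \<longlongrightarrow> l2) at_bot"
  shows "\<exists>c. \<forall>k. cmod (a k) \<le> c"
proof -
  have "\<forall>\<^sub>F k in at_top. dist (a k) l1 < 1" using assms(1) by (rule tendstoD) simp
  then obtain N where N: "\<And>k. k \<ge> N \<Longrightarrow> dist (a k) l1 < 1" by (auto simp: eventually_at_top_linorder)
  have "\<forall>\<^sub>F k in at_bot. dist (a k) l2 < 1" using assms(2) by (rule tendstoD) simp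
  then obtain N' where N': "\<And>k. k \<le> N' \<Longrightarrow> dist (a k) l2 < 1" by (auto simp: eventually_at_bot_linorder)
  define c where "c = cmod l1 + 1 + cmod l2 + 1 + (\<Sum>k\<in>{N'..N}. cmod (a k))"
  have s0: "0 \<le> (\<Sum>k\<in>{N'..N}. cmod (a k))" by (intro sum_nonneg) auto
  have "cmod (a k) \<le> c" for k
  proof -
    consider "k \<ge> N" | "k \<le> N'" | "k \<in> {N'..N}" by fastforce
    then show ?thesis
    proof cases
      case 1
      then have "cmod (a k) \<le> cmod l1 + 1" using N[OF 1] norm_triangle_ineq2[of "a k" l1]
        by (simp add: dist_norm)
      then show ?thesis unfolding c_def using s0 norm_ge_zero[of l2] by linarith
    next
      case 2
      then have "cmod (a k) \<le> cmod l2 + 1" using N'[OF 2] norm_triangle_ineq2[of "a k" l2]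
        by (simp add: dist_norm)
      then show ?thesis unfolding c_def using s0 norm_ge_zero[of l1] by linarith
    next
      case 3
      then have "cmod (a k) \<le> (\<Sum>k\<in>{N'..N}. cmod (a k))"
        by (intro member_le_sum) auto
      then show ?thesis unfolding c_def using norm_ge_zero[of l1] norm_ge_zero[of l2] by linarith
    qed
  qed
  then show ?thesis by blast
qed

lemma shift_band: "shift m = band m (\<lambda>_. 1)"
  by (simp add: shift_def band_def fun_eq_iff)

lemma diag_band: "diag a = band 0 a"
  by (simp add: diag_def band_def fun_eq_iff)

lemma mult_band_right: "op_mult M (band s g) = (\<lambda>i j. M i (j + s) * g j)"
  unfolding op_mult_def fun_eq_iff
proof (intro allI)
  fix i j
  show "infsum (\<lambda>k. M i k * band s g k j) UNIV = M i (j + s) * g j"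
    by (subst infsum_single_pt[where c="j + s"]) (auto simp: band_def)
qed

lemma mult_band_left: "op_mult (band s g) M = (\<lambda>i j. g (i - s) * M (i - s) j)"
  unfolding op_mult_def fun_eq_iff
proof (intro allI)
  fix i j
  show "infsum (\<lambda>k. band s g i k * M k j) UNIV = g (i - s) * M (i - s) j"
    by (subst infsum_single_pt[where c="i - s"]) (auto simp: band_def)
qed

lemma Calg_bnd: "M \<in> Calg \<Longrightarrow> \<exists>B. bnd M B"
proof (induction rule: Calg.induct)
  case gen_U
  show ?case using bnd_band[of "\<lambda>_. 1" 1 1] by (auto simp: shift_band)
next
  case (gen_diag a)
  then obtain c where "\<forall>k. cmod (a k) \<le> c" using bounded_lims unfolding has_finite_limits_def by blast
  then show ?case using bnd_band[of a c 0] by (auto simp: diag_band)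
next
  case (add M N) then show ?case using bnd_add by blast
next
  case (scale M c) then show ?case using bnd_scale by blast
next
  case (mult M N) then show ?case using bnd_mult by blast
next
  case (adj M) then show ?case using bnd_adj by blast
next
  case (lim X Y)
  have "\<forall>\<^sub>F j in sequentially. opnorm_sq (op_diff (X j) Y) < 1"
    using lim.hyps(2) by (rule order_tendstoD) simp
  then obtain j where j: "opnorm_sq (op_diff (X j) Y) < 1" by (auto simp: eventually_sequentially)
  then have "bnd (op_diff (X j) Y) 1" by (intro opnorm_bnd) auto
  moreover obtain B where "bnd (X j) B" using lim.IH by blast
  ultimately have "bnd (op_diff (X j) (op_diff (X j) Y)) (2 * B + 2 * 1)" by (intro bnd_diff)
  moreover have "op_diff (X j) (op_diff (X j) Y) = Y" by (simp add: op_diff_def)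
  ultimately show ?case by auto
qed

lemma filterlim_top_shift: "filterlim (\<lambda>k::int. k + c) at_top at_top"
  unfolding filterlim_at_top eventually_at_top_linorder
proof
  fix Z show "\<exists>N. \<forall>n\<ge>N. Z \<le> n + c" by (rule exI[of _ "Z - c"]) auto
qed

lemma filterlim_bot_shift: "filterlim (\<lambda>k::int. k + c) at_bot at_bot"
  unfolding filterlim_at_bot eventually_at_bot_linorder
proof
  fix Z show "\<exists>N. \<forall>n\<le>N. n + c \<le> Z" by (rule exI[of _ "Z - c"]) auto
qed

lemma tele_zero:
  fixes \<delta> c :: "int \<Rightarrow> complex"
  assumes lim: "\<And>\<epsilon>. \<epsilon> > 0 \<Longrightarrow> \<exists>N. \<forall>p\<ge>N. cmod (\<delta> p - L) \<le> \<epsilon>"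
  and appr: "\<And>\<epsilon>. \<epsilon> > 0 \<Longrightarrow> \<exists>c B. (\<forall>p. cmod (c p) \<le> B) \<and> (\<forall>p. cmod (\<delta> p - (c (p+1) - c p)) \<le> \<epsilon>)"
  shows "L = 0"
proof (rule ccontr)
  assume L: "L \<noteq> 0"
  define \<epsilon> where "\<epsilon> = cmod L / 4"
  have e: "\<epsilon> > 0" using L by (simp add: \<epsilon>_def)
  obtain N where N: "\<And>p. p \<ge> N \<Longrightarrow> cmod (\<delta> p - L) \<le> \<epsilon>" using lim[OF e] by blast
  obtain c B where B: "\<And>p. cmod (c p) \<le> B" and c: "\<And>p. cmod (\<delta> p - (c (p+1) - c p)) \<le> \<epsilon>"
    using appr[OF e] by blast
  have step: "cmod (L - (c (p+1) - c p)) \<le> 2 * \<epsilon>" if "p \<ge> N" for p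
  proof -
    have "L - (c (p+1) - c p) = (\<delta> p - (c (p+1) - c p)) - (\<delta> p - L)" by simp
    also have "cmod \<dots> \<le> cmod (\<delta> p - (c (p+1) - c p)) + cmod (\<delta> p - L)" by (rule norm_triangle_ineq4)
    finally show ?thesis using c[of p] N[OF that] by simp
  qed
  have ind: "cmod (of_nat m * L - (c (N + int m) - c N)) \<le> 2 * \<epsilon> * real m" for m :: nat
  proof (induction m)
    case 0 then show ?case by simp
  next
    case (Suc m)
    have "of_nat (Suc m) * L - (c (N + int (Suc m)) - c N)
        = (of_nat m * L - (c (N + int m) - c N)) + (L - (c (N + int m + 1) - c (N + int m)))"
      by (simp add: algebra_simps)
    also have "cmod \<dots> \<le> cmod (of_nat m * L - (c (N + int m) - c N)) + cmod (L - (c (N + int m + 1) - c (N + int m)))"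
      by (rule norm_triangle_ineq)
    also have "\<dots> \<le> 2 * \<epsilon> * real m + 2 * \<epsilon>"
      using Suc.IH step[of "N + int m"] by simp
    finally show ?case by (simp add: algebra_simps)
  qed
  obtain m :: nat where m: "real m > 4 * B / cmod L + 1" using reals_Archimedean2 by blast
  have B0: "0 \<le> B" using B[of 0] norm_ge_zero[of "c 0"] by linarith
  have "real m * cmod L = cmod (of_nat m * L)" by (simp add: norm_mult)
  also have "\<dots> \<le> cmod (of_nat m * L - (c (N + int m) - c N)) + cmod (c (N + int m) - c N)"
    using norm_triangle_ineq[of "of_nat m * L - (c (N + int m) - c N)" "c (N + int m) - c N"] by simp
  also have "\<dots> \<le> 2 * \<epsilon> * real m + 2 * B"
    using ind[of m] norm_triangle_ineq4[of "c (N + int m)" "c N"] B[of "N + int m"] B[of N] by linarith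
  finally have "real m * cmod L \<le> real m * cmod L / 2 + 2 * B" by (simp add: \<epsilon>_def mult.commute)
  then have "real m * cmod L \<le> 4 * B" by simp
  moreover have "real m * cmod L > 4 * B"
  proof -
    have "real m > 4 * B / cmod L" using m by simp
    then show ?thesis using L by (simp add: divide_less_eq)
  qed
  ultimately show False by simp
qed

lemma tendsto_top_eps:
  fixes f :: "int \<Rightarrow> complex"
  assumes "(f \<longlongrightarrow> L) at_top" "\<epsilon> > 0" shows "\<exists>N. \<forall>p\<ge>N. cmod (f p - L) \<le> \<epsilon>"
proof -
  have "\<forall>\<^sub>F p in at_top. dist (f p) L < \<epsilon>" using assms by (rule tendstoD)
  then obtain N where "\<forall>p\<ge>N. cmod (f p - L) < \<epsilon>" by (auto simp: eventually_at_top_linorder dist_norm)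
  then show ?thesis by (meson less_imp_le)
qed

lemma tendsto_bot_eps:
  fixes f :: "int \<Rightarrow> complex"
  assumes "(f \<longlongrightarrow> L) at_bot" "\<epsilon> > 0" shows "\<exists>N. \<forall>p\<le>N. cmod (f p - L) \<le> \<epsilon>"
proof -
  have "\<forall>\<^sub>F p in at_bot. dist (f p) L < \<epsilon>" using assms by (rule tendstoD)
  then obtain N where "\<forall>p\<le>N. cmod (f p - L) < \<epsilon>" by (auto simp: eventually_at_bot_linorder dist_norm)
  then show ?thesis by (meson less_imp_le)
qed

lemma band_shift_diag: "op_mult (shift m) (diag g) = band m g"
  unfolding shift_band mult_band_left by (simp add: diag_def band_def fun_eq_iff)

lemma forward:
  assumes ci: "convergent_increments \<beta>" and ai: "approx_inner (cov_deriv n \<beta>)"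
  shows "((\<lambda>k. \<beta> (k + 1) - \<beta> k) \<longlongrightarrow> 0) at_top \<and> ((\<lambda>k. \<beta> (k + 1) - \<beta> k) \<longlongrightarrow> 0) at_bot"
proof -
  define \<delta> where "\<delta> = (\<lambda>k. \<beta> (k + 1) - \<beta> k)"
  obtain L1 L2 where L1: "((\<lambda>k. \<beta> k - \<beta> (k - 1)) \<longlongrightarrow> L1) at_top"
    and L2: "((\<lambda>k. \<beta> k - \<beta> (k - 1)) \<longlongrightarrow> L2) at_bot"
    using ci unfolding convergent_increments_def by blast
  have dtop: "(\<delta> \<longlongrightarrow> L1) at_top"
    using filterlim_compose[OF L1 filterlim_top_shift[of 1]] by (simp add: \<delta>_def)
  have dbot: "(\<delta> \<longlongrightarrow> L2) at_bot"
    using filterlim_compose[OF L2 filterlim_bot_shift[of 1]] by (simp add: \<delta>_def)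
  obtain x where xC: "\<And>j. x j \<in> Calg" and
    conv: "\<And>a. a \<in> Alg0 \<Longrightarrow> ((\<lambda>j. opnorm_sq (op_diff (cov_deriv n \<beta> a) (op_comm (x j) a))) \<longlongrightarrow> 0) sequentially"
    using ai unfolding approx_inner_def by blast
  define a0 where "a0 = band 1 (\<lambda>_. 1)"
  have a0: "a0 \<in> Alg0"
    unfolding Alg0_def
  proof (intro CollectI exI conjI)
    show "finite {1::int}" by simp
    show "\<forall>m\<in>{1::int}. eventually_const ((\<lambda>_ _. 1) m)" by (simp add: eventually_const_def)
    show "a0 = (\<lambda>i j. \<Sum>m\<in>{1}. op_mult (shift m) (diag ((\<lambda>_ _. 1) m)) i j)"
      by (simp add: band_shift_diag a0_def)
  qed
  define D where "D = (\<lambda>j. op_diff (cov_deriv n \<beta> a0) (op_comm (x j) a0))"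
  have Dent: "D j (p + n + 1) p = \<delta> p - (x j (p + n + 1) (p + 1) - x j (p + n) p)" for j p
    unfolding D_def cov_deriv_def op_comm_def band_shift_diag a0_def op_diff_def mult_band_left mult_band_right
    by (simp add: band_def \<delta>_def)
  have appr: "\<exists>c B. (\<forall>p. cmod (c p) \<le> B) \<and> (\<forall>p. cmod (\<delta> p - (c (p+1) - c p)) \<le> \<epsilon>)"
    if e: "\<epsilon> > 0" for \<epsilon>
  proof -
    have "\<forall>\<^sub>F j in sequentially. opnorm_sq (D j) < ennreal (\<epsilon>\<^sup>2)"
      using conv[OF a0] unfolding D_def by (rule order_tendstoD) (use e in simp)
    then obtain j where j: "opnorm_sq (D j) < ennreal (\<epsilon>\<^sup>2)" by (auto simp: eventually_sequentially)
    then have bD: "bnd (D j) (\<epsilon>\<^sup>2)" by (intro opnorm_bnd) auto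
    obtain B where bx: "bnd (x j) B" using Calg_bnd[OF xC] by blast
    define c where "c = (\<lambda>p. x j (p + n) p)"
    have "cmod (c p) \<le> sqrt B" for p
      using bnd_entry[OF bx] unfolding c_def by (simp add: real_le_rsqrt)
    moreover have "cmod (\<delta> p - (c (p+1) - c p)) \<le> \<epsilon>" for p
    proof -
      have "(cmod (D j (p + n + 1) p))\<^sup>2 \<le> \<epsilon>\<^sup>2" by (rule bnd_entry[OF bD])
      then have "cmod (D j (p + n + 1) p) \<le> \<epsilon>" using e by (simp add: power2_le_iff_abs_le)
      then show ?thesis unfolding Dent c_def by (simp add: add_ac)
    qed
    ultimately show ?thesis by blast
  qed
  have "L1 = 0"
    by (rule tele_zero[of \<delta> L1]) (use tendsto_top_eps[OF dtop] appr in auto)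
  moreover have "- L2 = 0"
  proof (rule tele_zero[of "\<lambda>p. - \<delta> (- p - 1)"])
    fix \<epsilon> :: real assume e: "\<epsilon> > 0"
    obtain N where N: "\<forall>p\<le>N. cmod (\<delta> p - L2) \<le> \<epsilon>" using tendsto_bot_eps[OF dbot e] by blast
    have "\<forall>p\<ge>- N - 1. cmod (- \<delta> (- p - 1) - - L2) \<le> \<epsilon>"
    proof (intro allI impI)
      fix p :: int assume "p \<ge> - N - 1"
      then have "cmod (\<delta> (- p - 1) - L2) \<le> \<epsilon>" using N by auto
      then show "cmod (- \<delta> (- p - 1) - - L2) \<le> \<epsilon>" by (simp add: norm_minus_commute)
    qed
    then show "\<exists>N. \<forall>p\<ge>N. cmod (- \<delta> (- p - 1) - - L2) \<le> \<epsilon>" by blast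
  next
    fix \<epsilon> :: real assume e: "\<epsilon> > 0"
    obtain c B where B: "\<forall>p. cmod (c p) \<le> B" and c: "\<forall>p. cmod (\<delta> p - (c (p+1) - c p)) \<le> \<epsilon>"
      using appr[OF e] by blast
    have "\<forall>p. cmod (- \<delta> (- p - 1) - (c (- (p + 1)) - c (- p))) \<le> \<epsilon>"
    proof
      fix p :: int
      have "- \<delta> (- p - 1) - (c (- (p + 1)) - c (- p)) = - (\<delta> (- p - 1) - (c (- p - 1 + 1) - c (- p - 1)))"
      proof -
        have e1: "- (p + 1) = - p - 1" by simp
        have e2: "- p - 1 + 1 = - p" by simp
        show ?thesis unfolding e1 e2 by simp
      qed
      then show "cmod (- \<delta> (- p - 1) - (c (- (p + 1)) - c (- p))) \<le> \<epsilon>"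
        using c[rule_format, of "- p - 1"] by (simp only: norm_minus_cancel)
    qed
    then show "\<exists>c B. (\<forall>p. cmod (c p) \<le> B) \<and> (\<forall>p. cmod (- \<delta> (- p - 1) - (c (p + 1) - c p)) \<le> \<epsilon>)"
      using B by (intro exI[of _ "\<lambda>p. c (- p)"] exI[of _ B]) auto
  qed
  ultimately show ?thesis using dtop dbot unfolding \<delta>_def by simp
qed

definition clampJ :: "int \<Rightarrow> int \<Rightarrow> int" where
  "clampJ J k = max (- J) (min J k)"

lemma incr_bound0:
  fixes \<beta> :: "int \<Rightarrow> complex"
  assumes h: "\<And>k. lo \<le> k \<Longrightarrow> k < hi \<Longrightarrow> cmod (\<beta> (k + 1) - \<beta> k) \<le> \<eta>"
  shows "lo \<le> u \<Longrightarrow> u + int d \<le> hi \<Longrightarrow> cmod (\<beta> (u + int d) - \<beta> u) \<le> real d * \<eta>"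
proof (induction d)
  case 0 then show ?case by simp
next
  case (Suc d)
  have "\<beta> (u + int (Suc d)) - \<beta> u = (\<beta> (u + int d + 1) - \<beta> (u + int d)) + (\<beta> (u + int d) - \<beta> u)"
    by (simp add: algebra_simps)
  also have "cmod \<dots> \<le> cmod (\<beta> (u + int d + 1) - \<beta> (u + int d)) + cmod (\<beta> (u + int d) - \<beta> u)"
    by (rule norm_triangle_ineq)
  also have "\<dots> \<le> \<eta> + real d * \<eta>"
    using h[of "u + int d"] Suc by (intro add_mono) auto
  finally show ?case by (simp add: algebra_simps)
qed

lemma incr_bound:
  fixes \<beta> :: "int \<Rightarrow> complex"
  assumes h: "\<And>k. lo \<le> k \<Longrightarrow> k < hi \<Longrightarrow> cmod (\<beta> (k + 1) - \<beta> k) \<le> \<eta>"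
    and "lo \<le> u" "u \<le> hi" "lo \<le> v" "v \<le> hi"
  shows "cmod (\<beta> u - \<beta> v) \<le> real_of_int \<bar>u - v\<bar> * \<eta>"
proof (cases "u \<le> v")
  case True
  have "cmod (\<beta> (u + int (nat (v - u))) - \<beta> u) \<le> real (nat (v - u)) * \<eta>"
    by (rule incr_bound0[where \<beta>=\<beta> and lo=lo and hi=hi and \<eta>=\<eta>, OF h]) (use assms True in auto)
  then show ?thesis using True by (simp add: norm_minus_commute)
next
  case False
  have "cmod (\<beta> (v + int (nat (u - v))) - \<beta> v) \<le> real (nat (u - v)) * \<eta>"
    by (rule incr_bound0[where \<beta>=\<beta> and lo=lo and hi=hi and \<eta>=\<eta>, OF h]) (use assms False in auto)
  then show ?thesis using False by simp
qed

lemma clamp_lip: "\<bar>clampJ J x - clampJ J y\<bar> \<le> \<bar>x - y\<bar>"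
  unfolding clampJ_def by (simp add: max_def min_def)

lemma clamp_lower: "k \<ge> x \<Longrightarrow> x \<le> J \<Longrightarrow> clampJ J k \<ge> x"
  unfolding clampJ_def by linarith

lemma clamp_upper: "k \<le> x \<Longrightarrow> - J \<le> x \<Longrightarrow> clampJ J k \<le> x"
  unfolding clampJ_def by linarith

lemma clamp_range: "J \<ge> 0 \<Longrightarrow> - J \<le> clampJ J k \<and> clampJ J k \<le> J"
  unfolding clampJ_def by linarith

lemma ec_decomp:
  assumes "eventually_const a"
  shows "\<exists>K cp cm. K \<ge> 0 \<and> (\<forall>k\<ge>K. a k = cp) \<and> (\<forall>k\<le>-K. a k = cm) \<and> (\<exists>C. \<forall>k. cmod (a k) \<le> C)"
proof -
  obtain k0 where k0: "\<forall>k\<ge>k0. a k = a k0" "\<forall>k\<le>-k0. a k = a (-k0)"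
    using assms unfolding eventually_const_def by blast
  define K where "K = \<bar>k0\<bar>"
  have ab: "k0 \<le> K" "- k0 \<le> K" unfolding K_def by simp_all
  have p: "\<forall>k\<ge>K. a k = a k0"
  proof (intro allI impI)
    fix k assume "k \<ge> K" then have "k \<ge> k0" using ab by linarith
    then show "a k = a k0" using k0(1) by blast
  qed
  have m: "\<forall>k\<le>-K. a k = a (-k0)"
  proof (intro allI impI)
    fix k assume "k \<le> -K" then have "k \<le> -k0" using ab by linarith
    then show "a k = a (-k0)" using k0(2) by blast
  qed
  have "(a \<longlongrightarrow> a k0) at_top"
    using p by (intro tendsto_eventually) (simp add: eventually_at_top_linorder, blast)
  moreover have "(a \<longlongrightarrow> a (-k0)) at_bot"
    using m by (intro tendsto_eventually) (simp add: eventually_at_bot_linorder, blast)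
  ultimately obtain C where C: "\<forall>k. cmod (a k) \<le> C" using bounded_lims by blast
  have "K \<ge> 0" unfolding K_def by simp
  then show ?thesis using p m C by blast
qed

lemma key_est:
  fixes \<beta> a :: "int \<Rightarrow> complex"
  assumes htop: "((\<lambda>k. \<beta> (k + 1) - \<beta> k) \<longlongrightarrow> 0) at_top"
    and hbot: "((\<lambda>k. \<beta> (k + 1) - \<beta> k) \<longlongrightarrow> 0) at_bot"
    and ec: "eventually_const a" and eta: "\<eta> > 0"
  shows "\<exists>J0. \<forall>J\<ge>J0. \<forall>k. cmod ((\<beta> (k + m) - \<beta> (clampJ J (k + m))) * a k
                 - a (k + n) * (\<beta> k - \<beta> (clampJ J k))) \<le> \<eta>"
proof -
  obtain K cp cm C where K: "K \<ge> 0" and hp: "\<forall>k\<ge>K. a k = cp" and hm: "\<forall>k\<le>-K. a k = cm"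
    and C: "\<forall>k. cmod (a k) \<le> C"
    using ec_decomp[OF ec] by blast
  have C0: "0 \<le> C" using C[rule_format, of 0] norm_ge_zero[of "a 0"] by linarith
  define M where "M = \<bar>m\<bar>"
  define \<eta>' where "\<eta>' = \<eta> / (2 * (C + 1) * (real_of_int M + 1))"
  have M0: "M \<ge> 0" unfolding M_def by simp
  have e': "\<eta>' > 0" unfolding \<eta>'_def using eta C0 M0 by (intro divide_pos_pos mult_pos_pos) auto
  have fin: "C * (2 * real_of_int M * \<eta>') \<le> \<eta>"
  proof -
    have d: "(C + 1) * (real_of_int M + 1) > 0" using C0 M0 by (intro mult_pos_pos) auto
    have "C * (2 * real_of_int M * \<eta>') = \<eta> * ((C * real_of_int M) / ((C + 1) * (real_of_int M + 1)))"
      unfolding \<eta>'_def by (simp add: divide_simps)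
    also have "\<dots> \<le> \<eta> * 1"
    proof (rule mult_left_mono)
      have "C * real_of_int M \<le> (C + 1) * (real_of_int M + 1)" using C0 M0 by (simp add: algebra_simps)
      then show "(C * real_of_int M) / ((C + 1) * (real_of_int M + 1)) \<le> 1" using d by (simp add: divide_le_eq)
    qed (use eta in simp)
    finally show ?thesis by simp
  qed
  obtain T where T: "\<forall>k\<ge>T. cmod ((\<beta> (k + 1) - \<beta> k) - 0) \<le> \<eta>'" using tendsto_top_eps[OF htop e'] by blast
  obtain T' where T': "\<forall>k\<le>T'. cmod ((\<beta> (k + 1) - \<beta> k) - 0) \<le> \<eta>'" using tendsto_bot_eps[OF hbot e'] by blast
  define J0 where "J0 = K + \<bar>n\<bar> + 2 * M + \<bar>T\<bar> + \<bar>T'\<bar> + 1"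
  have main: "cmod ((\<beta> (k + m) - \<beta> (clampJ J (k + m))) * a k - a (k + n) * (\<beta> k - \<beta> (clampJ J k))) \<le> \<eta>"
    if J: "J \<ge> J0" for J k
  proof -
    define u1 where "u1 = clampJ J (k + m)"
    define u2 where "u2 = clampJ J k"
    have lip: "\<bar>u1 - u2\<bar> \<le> M" unfolding u1_def u2_def M_def using clamp_lip[of J "k + m" k] by simp
    have km: "\<bar>(k + m) - k\<bar> \<le> M" unfolding M_def by simp
    have abs_facts: "T \<le> \<bar>T\<bar>" "- T' \<le> \<bar>T'\<bar>" "n \<le> \<bar>n\<bar>" "- n \<le> \<bar>n\<bar>" "k \<le> \<bar>k\<bar>" "- k \<le> \<bar>k\<bar>"
      "m \<le> M" "- m \<le> M" "0 \<le> \<bar>T\<bar>" "0 \<le> \<bar>T'\<bar>" "0 \<le> \<bar>n\<bar>"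
      unfolding M_def by auto
    have JJ: "J \<ge> K + \<bar>n\<bar> + 2 * M + \<bar>T\<bar> + \<bar>T'\<bar> + 1" using J unfolding J0_def .
    have Jp: "J \<ge> 0" using JJ K M0 abs_facts by linarith
    have r1: "- J \<le> u1 \<and> u1 \<le> J" "- J \<le> u2 \<and> u2 \<le> J" unfolding u1_def u2_def using clamp_range[OF Jp] by auto
    consider "k > J - M" | "k < - J + M" | "- J \<le> k \<and> k \<le> J \<and> - J \<le> k + m \<and> k + m \<le> J"
      unfolding M_def by linarith
    then show ?thesis
    proof cases
      case 3
      then have "u1 = k + m" "u2 = k" unfolding u1_def u2_def clampJ_def by linarith+
      then show ?thesis using eta unfolding u1_def[symmetric] u2_def[symmetric] by simp
    next
      case 1
      have "k \<ge> K" "k + n \<ge> K" using 1 JJ abs_facts M0 K by linarith+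
      then have ak: "a k = cp" "a (k + n) = cp" using hp by auto
      have "(\<beta> (k + m) - \<beta> u1) * a k - a (k + n) * (\<beta> k - \<beta> u2) = cp * ((\<beta> (k + m) - \<beta> k) - (\<beta> u1 - \<beta> u2))"
        using ak by (simp add: algebra_simps)
      moreover
      define lo where "lo = J - 2 * M"
      define hi where "hi = \<bar>k\<bar> + M + J"
      have hlo: "\<And>k'. lo \<le> k' \<Longrightarrow> k' < hi \<Longrightarrow> cmod (\<beta> (k' + 1) - \<beta> k') \<le> \<eta>'"
      proof -
        fix k' assume "lo \<le> k'" "k' < hi"
        then have "k' \<ge> T" using JJ abs_facts M0 K unfolding lo_def by linarith
        then show "cmod (\<beta> (k' + 1) - \<beta> k') \<le> \<eta>'" using T by simp
      qed
      have b1: "cmod (\<beta> (k + m) - \<beta> k) \<le> real_of_int M * \<eta>'"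
      proof -
        have "cmod (\<beta> (k + m) - \<beta> k) \<le> real_of_int \<bar>(k + m) - k\<bar> * \<eta>'"
        proof (rule incr_bound[where \<beta>=\<beta> and lo=lo and hi=hi and \<eta>=\<eta>', OF hlo])
          show "lo \<le> k + m" "k + m \<le> hi" "lo \<le> k" "k \<le> hi"
            unfolding lo_def hi_def using 1 JJ abs_facts M0 K by linarith+
        qed
        also have "\<dots> \<le> real_of_int M * \<eta>'" using km e' by (intro mult_right_mono) auto
        finally show ?thesis .
      qed
      have b2: "cmod (\<beta> u1 - \<beta> u2) \<le> real_of_int M * \<eta>'"
      proof -
        have "cmod (\<beta> u1 - \<beta> u2) \<le> real_of_int \<bar>u1 - u2\<bar> * \<eta>'"
        proof (rule incr_bound[where \<beta>=\<beta> and lo=lo and hi=hi and \<eta>=\<eta>', OF hlo])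
          have "u1 \<ge> J - 2 * M" unfolding u1_def using 1 abs_facts M0 Jp by (intro clamp_lower) linarith+
          moreover have "u2 \<ge> J - 2 * M" unfolding u2_def using 1 abs_facts M0 Jp by (intro clamp_lower) linarith+
          ultimately show "lo \<le> u1" "lo \<le> u2" unfolding lo_def by auto
          show "u1 \<le> hi" "u2 \<le> hi" using r1 abs_facts M0 unfolding hi_def by linarith+
        qed
        also have "\<dots> \<le> real_of_int M * \<eta>'" using lip e' by (intro mult_right_mono) auto
        finally show ?thesis .
      qed
      have "cmod (cp * ((\<beta> (k + m) - \<beta> k) - (\<beta> u1 - \<beta> u2))) \<le> C * (2 * real_of_int M * \<eta>')"
      proof -
        have "cmod ((\<beta> (k + m) - \<beta> k) - (\<beta> u1 - \<beta> u2)) \<le> 2 * real_of_int M * \<eta>'"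
          using norm_triangle_ineq4[of "\<beta> (k + m) - \<beta> k" "\<beta> u1 - \<beta> u2"] b1 b2 by linarith
        moreover have "cmod cp \<le> C" using C ak by metis
        ultimately show ?thesis unfolding norm_mult using C0
          by (intro mult_mono) auto
      qed
      ultimately show ?thesis using fin unfolding u1_def u2_def by simp
    next
      case 2
      have "k \<le> - K" "k + n \<le> - K" using 2 JJ abs_facts M0 K by linarith+
      then have ak: "a k = cm" "a (k + n) = cm" using hm by auto
      have "(\<beta> (k + m) - \<beta> u1) * a k - a (k + n) * (\<beta> k - \<beta> u2) = cm * ((\<beta> (k + m) - \<beta> k) - (\<beta> u1 - \<beta> u2))"
        using ak by (simp add: algebra_simps)
      moreover
      define lo where "lo = - \<bar>k\<bar> - M - J"
      define hi where "hi = - J + 2 * M"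
      have hlo: "\<And>k'. lo \<le> k' \<Longrightarrow> k' < hi \<Longrightarrow> cmod (\<beta> (k' + 1) - \<beta> k') \<le> \<eta>'"
      proof -
        fix k' assume "lo \<le> k'" "k' < hi"
        then have "k' \<le> T'" using JJ abs_facts M0 K unfolding hi_def by linarith
        then show "cmod (\<beta> (k' + 1) - \<beta> k') \<le> \<eta>'" using T' by simp
      qed
      have b1: "cmod (\<beta> (k + m) - \<beta> k) \<le> real_of_int M * \<eta>'"
      proof -
        have "cmod (\<beta> (k + m) - \<beta> k) \<le> real_of_int \<bar>(k + m) - k\<bar> * \<eta>'"
        proof (rule incr_bound[where \<beta>=\<beta> and lo=lo and hi=hi and \<eta>=\<eta>', OF hlo])
          show "lo \<le> k + m" "k + m \<le> hi" "lo \<le> k" "k \<le> hi"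
            unfolding lo_def hi_def using 2 JJ abs_facts M0 K by linarith+
        qed
        also have "\<dots> \<le> real_of_int M * \<eta>'" using km e' by (intro mult_right_mono) auto
        finally show ?thesis .
      qed
      have b2: "cmod (\<beta> u1 - \<beta> u2) \<le> real_of_int M * \<eta>'"
      proof -
        have "cmod (\<beta> u1 - \<beta> u2) \<le> real_of_int \<bar>u1 - u2\<bar> * \<eta>'"
        proof (rule incr_bound[where \<beta>=\<beta> and lo=lo and hi=hi and \<eta>=\<eta>', OF hlo])
          have "u1 \<le> - J + 2 * M" unfolding u1_def using 2 abs_facts M0 Jp by (intro clamp_upper) linarith+
          moreover have "u2 \<le> - J + 2 * M" unfolding u2_def using 2 abs_facts M0 Jp by (intro clamp_upper) linarith+
          ultimately show "u1 \<le> hi" "u2 \<le> hi" unfolding hi_def by auto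
          show "lo \<le> u1" "lo \<le> u2" using r1 abs_facts M0 unfolding lo_def by linarith+
        qed
        also have "\<dots> \<le> real_of_int M * \<eta>'" using lip e' by (intro mult_right_mono) auto
        finally show ?thesis .
      qed
      have "cmod (cm * ((\<beta> (k + m) - \<beta> k) - (\<beta> u1 - \<beta> u2))) \<le> C * (2 * real_of_int M * \<eta>')"
      proof -
        have "cmod ((\<beta> (k + m) - \<beta> k) - (\<beta> u1 - \<beta> u2)) \<le> 2 * real_of_int M * \<eta>'"
          using norm_triangle_ineq4[of "\<beta> (k + m) - \<beta> k" "\<beta> u1 - \<beta> u2"] b1 b2 by linarith
        moreover have "cmod cm \<le> C" using C ak by metis
        ultimately show ?thesis unfolding norm_mult using C0
          by (intro mult_mono) auto
      qed
      ultimately show ?thesis using fin unfolding u1_def u2_def by simp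
    qed
  qed
  then show ?thesis by blast
qed

lemma shift_mult: "op_mult (shift a) (shift b) = shift (a + b)"
  unfolding shift_band[of a] mult_band_left by (auto simp: shift_def fun_eq_iff)

lemma adj_shift: "op_adj (shift 1) = shift (-1)"
  by (auto simp: op_adj_def shift_def fun_eq_iff)

lemma shift_Calg: "shift m \<in> Calg"
proof -
  have s1: "shift 1 \<in> Calg" by (rule Calg.gen_U)
  have sm1: "shift (-1) \<in> Calg" using Calg.adj[OF s1] by (simp add: adj_shift)
  have s0: "shift 0 \<in> Calg" using Calg.mult[OF s1 sm1] by (simp add: shift_mult)
  have pos: "shift (int k) \<in> Calg" for k
  proof (induction k)
    case 0 then show ?case using s0 by simp
  next
    case (Suc k)
    have "shift (int (Suc k)) = op_mult (shift 1) (shift (int k))" by (simp add: shift_mult add_ac)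
    then show ?case using Calg.mult[OF s1 Suc] by simp
  qed
  have neg: "shift (- int k) \<in> Calg" for k
  proof (induction k)
    case 0 then show ?case using s0 by simp
  next
    case (Suc k)
    have "shift (- int (Suc k)) = op_mult (shift (-1)) (shift (- int k))" by (simp add: shift_mult)
    then show ?case using Calg.mult[OF sm1 Suc] by simp
  qed
  show ?thesis
  proof (cases "m \<ge> 0")
    case True then show ?thesis using pos[of "nat m"] by simp
  next
    case False then show ?thesis using neg[of "nat (- m)"] by simp
  qed
qed

lemma clamp_diag_Calg:
  assumes "J \<ge> 0" shows "diag (\<lambda>k. \<beta> (clampJ J k)) \<in> Calg"
proof (rule Calg.gen_diag)
  have "((\<lambda>k. \<beta> (clampJ J k)) \<longlongrightarrow> \<beta> J) at_top"
  proof (rule tendsto_eventually)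
    have "\<forall>k\<ge>J. \<beta> (clampJ J k) = \<beta> J" using assms unfolding clampJ_def by auto
    then show "\<forall>\<^sub>F k in at_top. \<beta> (clampJ J k) = \<beta> J" by (simp add: eventually_at_top_linorder, blast)
  qed
  moreover have "((\<lambda>k. \<beta> (clampJ J k)) \<longlongrightarrow> \<beta> (-J)) at_bot"
  proof (rule tendsto_eventually)
    have "\<forall>k\<le>-J. \<beta> (clampJ J k) = \<beta> (-J)" using assms unfolding clampJ_def by auto
    then show "\<forall>\<^sub>F k in at_bot. \<beta> (clampJ J k) = \<beta> (-J)" by (simp add: eventually_at_bot_linorder, blast)
  qed
  ultimately show "has_finite_limits (\<lambda>k. \<beta> (clampJ J k))" unfolding has_finite_limits_def by blast
qed

lemma comm_band: "op_comm (band n g) a = (\<lambda>i j. g (i - n) * a (i - n) j - a i (j + n) * g j)"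
  unfolding op_comm_def op_diff_def mult_band_left mult_band_right by simp

lemma D_formula:
  fixes am :: "int \<Rightarrow> int \<Rightarrow> complex" and \<beta> g :: "int \<Rightarrow> complex"
  assumes a: "a = (\<lambda>i j. \<Sum>m\<in>F. band m (am m) i j)"
  shows "op_diff (op_comm (band n \<beta>) a) (op_comm (band n g) a)
    = (\<lambda>i j. \<Sum>m\<in>F. band (m + n) (\<lambda>k. (\<beta> (k + m) - g (k + m)) * am m k - am m (k + n) * (\<beta> k - g k)) i j)"
proof (intro ext)
  fix i j
  have "op_diff (op_comm (band n \<beta>) a) (op_comm (band n g) a) i j
     = (\<beta> (i - n) - g (i - n)) * a (i - n) j - a i (j + n) * (\<beta> j - g j)"
    unfolding comm_band op_diff_def by (simp add: algebra_simps)
  also have "\<dots> = (\<Sum>m\<in>F. (\<beta> (i - n) - g (i - n)) * band m (am m) (i - n) j - band m (am m) i (j + n) * (\<beta> j - g j))"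
    unfolding a by (simp add: sum_distrib_left sum_distrib_right sum_subtractf)
  also have "\<dots> = (\<Sum>m\<in>F. band (m + n) (\<lambda>k. (\<beta> (k + m) - g (k + m)) * am m k - am m (k + n) * (\<beta> k - g k)) i j)"
  proof (rule sum.cong[OF refl])
    fix m
    show "(\<beta> (i - n) - g (i - n)) * band m (am m) (i - n) j - band m (am m) i (j + n) * (\<beta> j - g j)
        = band (m + n) (\<lambda>k. (\<beta> (k + m) - g (k + m)) * am m k - am m (k + n) * (\<beta> k - g k)) i j"
    proof (cases "i = j + (m + n)")
      case True
      then have "i - n = j + m" by simp
      then show ?thesis using True unfolding band_def by (simp add: add_ac)
    next
      case False
      then have "i - n \<noteq> j + m" "i \<noteq> j + n + m" by (simp_all add: algebra_simps)
      then show ?thesis using False unfolding band_def by simp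
    qed
  qed
  finally show "op_diff (op_comm (band n \<beta>) a) (op_comm (band n g) a) i j
    = (\<Sum>m\<in>F. band (m + n) (\<lambda>k. (\<beta> (k + m) - g (k + m)) * am m k - am m (k + n) * (\<beta> k - g k)) i j)" .
qed

lemma ennreal_tendsto_0I:
  assumes "\<And>\<epsilon>. \<epsilon> > 0 \<Longrightarrow> \<forall>\<^sub>F j in F. f j \<le> ennreal \<epsilon>"
  shows "(f \<longlongrightarrow> (0::ennreal)) F"
proof (rule order_tendstoI)
  fix u :: ennreal assume "u > 0"
  then obtain v where v: "0 < v" "v < u" using dense by blast
  then have "v < \<infinity>" using top.not_eq_extremum by fastforce
  then obtain r where r: "v = ennreal r" "r \<ge> 0" by (cases v) auto
  with v have "r > 0" by simp
  then have "\<forall>\<^sub>F j in F. f j \<le> ennreal r" by (rule assms)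
  then show "\<forall>\<^sub>F j in F. f j < u" by eventually_elim (use v r in auto)
qed simp

lemma backward:
  fixes \<beta> :: "int \<Rightarrow> complex"
  assumes htop: "((\<lambda>k. \<beta> (k + 1) - \<beta> k) \<longlongrightarrow> 0) at_top"
    and hbot: "((\<lambda>k. \<beta> (k + 1) - \<beta> k) \<longlongrightarrow> 0) at_bot"
  shows "approx_inner (cov_deriv n \<beta>)"
  unfolding approx_inner_def
proof (intro exI conjI ballI allI)
  define x where "x = (\<lambda>j::nat. op_mult (shift n) (diag (\<lambda>k. \<beta> (clampJ (int j) k))))"
  show "x j \<in> Calg" for j
    unfolding x_def by (intro Calg.mult shift_Calg clamp_diag_Calg) simp
  fix a assume "a \<in> Alg0"
  then obtain F am where F: "finite F" and ec: "\<forall>m\<in>F. eventually_const (am m)"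
    and a0: "a = (\<lambda>i j. \<Sum>m\<in>F. op_mult (shift m) (diag (am m)) i j)"
    unfolding Alg0_def by blast
  have a: "a = (\<lambda>i j. \<Sum>m\<in>F. band m (am m) i j)" using a0 by (simp add: band_shift_diag)
  define f where "f = (\<lambda>(J::int) m k. (\<beta> (k + m) - \<beta> (clampJ J (k + m))) * am m k - am m (k + n) * (\<beta> k - \<beta> (clampJ J k)))"
  have Deq: "op_diff (cov_deriv n \<beta> a) (op_comm (x j) a) = (\<lambda>i j'. \<Sum>m\<in>F. band (m + n) (f (int j) m) i j')" for j
    unfolding cov_deriv_def x_def band_shift_diag f_def
    by (rule D_formula[OF a])
  show "((\<lambda>j. opnorm_sq (op_diff (cov_deriv n \<beta> a) (op_comm (x j) a))) \<longlongrightarrow> 0) sequentially"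
  proof (rule ennreal_tendsto_0I)
    fix \<epsilon> :: real assume e: "\<epsilon> > 0"
    define \<eta> where "\<eta> = sqrt \<epsilon> / (real (card F) + 1)"
    have eta: "\<eta> > 0" unfolding \<eta>_def using e by simp
    have ev: "\<forall>m\<in>F. \<forall>\<^sub>F j in sequentially. \<forall>k. cmod (f (int j) m k) \<le> \<eta>"
    proof
      fix m assume m: "m \<in> F"
      obtain J0 where J0: "\<forall>J\<ge>J0. \<forall>k. cmod ((\<beta> (k + m) - \<beta> (clampJ J (k + m))) * am m k
                 - am m (k + n) * (\<beta> k - \<beta> (clampJ J k))) \<le> \<eta>"
        using key_est[OF htop hbot ec[rule_format, OF m] eta] by blast
      show "\<forall>\<^sub>F j in sequentially. \<forall>k. cmod (f (int j) m k) \<le> \<eta>"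
        unfolding eventually_sequentially
      proof (intro exI allI impI)
        fix j k assume "nat J0 \<le> j"
        then have "int j \<ge> J0" by linarith
        then show "cmod (f (int j) m k) \<le> \<eta>" using J0 unfolding f_def by simp
      qed
    qed
    have "\<forall>\<^sub>F j in sequentially. \<forall>m\<in>F. \<forall>k. cmod (f (int j) m k) \<le> \<eta>"
      using eventually_ball_finite[OF F ev] .
    then show "\<forall>\<^sub>F j in sequentially. opnorm_sq (op_diff (cov_deriv n \<beta> a) (op_comm (x j) a)) \<le> ennreal \<epsilon>"
    proof eventually_elim
      case (elim j)
      have "bnd (\<lambda>i j'. \<Sum>m\<in>F. band (m + n) (f (int j) m) i j') (real (card F) * real (card F) * \<eta>\<^sup>2)"
        using elim by (intro bnd_sum F bnd_band) auto
      then have "opnorm_sq (op_diff (cov_deriv n \<beta> a) (op_comm (x j) a)) \<le> ennreal (real (card F) * real (card F) * \<eta>\<^sup>2)"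
        unfolding Deq by (rule bnd_opnorm)
      also have "\<dots> \<le> ennreal \<epsilon>"
      proof (rule ennreal_leI)
        have c: "real (card F) + 1 > 0" by simp
        have "real (card F) * real (card F) * \<eta>\<^sup>2 = \<epsilon> * ((real (card F))\<^sup>2 / (real (card F) + 1)\<^sup>2)"
          unfolding \<eta>_def using e c by (simp add: power_divide power2_eq_square)
        also have "\<dots> \<le> \<epsilon> * 1"
        proof (rule mult_left_mono)
          have "(real (card F))\<^sup>2 \<le> (real (card F) + 1)\<^sup>2" by (intro power_mono) auto
          then show "(real (card F))\<^sup>2 / (real (card F) + 1)\<^sup>2 \<le> 1" using c by (simp add: divide_le_eq)
        qed (use e in simp)
        finally show "real (card F) * real (card F) * \<eta>\<^sup>2 \<le> \<epsilon>" by simp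
      qed
      finally show ?case .
    qed
  qed
qed

theorem mainTheorem10:
  fixes n :: int and \<beta> :: "int \<Rightarrow> complex"
  assumes "convergent_increments \<beta>"
  shows "approx_inner (cov_deriv n \<beta>) \<longleftrightarrow>
    (((\<lambda>k. \<beta> (k + 1) - \<beta> k) \<longlongrightarrow> 0) at_top \<and> ((\<lambda>k. \<beta> (k + 1) - \<beta> k) \<longlongrightarrow> 0) at_bot)"
  using forward[OF assms] backward by blast

end
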